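(* A Boolean function $f:\{0,1\}^n\to\{0,1\}^m$ is fully balanced if and only if its image $\operatorname{img}(f)$ is an affine subspace of $\mathbb{F}_2^m$ and the fibre size $\#f^{-1}(\mathbf{w})$ is the same for every $\mathbf{w}\in\operatorname{img}(f)$.
   Context: Strings in $\{0,1\}^k$ are identified with vectors of $\mathbb{F}_2^k$; $\mathbf{a}\cdot\mathbf{b}=\bigoplus_i a_ib_i$ (mod 2). For $\mathbf{y}\in\{0,1\}^m$, $f$ is $\mathbf{y}$-balanced if $f(\mathbf{x})\cdot\mathbf{y}=0$ for exactly half of the $\mathbf{x}\in\{0,1\}^n$ and $=1$ for the other half, and $\mathbf{y}$-constant if $f(\mathbf{x})\cdot\mathbf{y}$ is the same for all $\mathbf{x}$. $f$ is fully balanced if for every $\mathbf{y}\in\{0,1\}^m$, $f$ is either $\mathbf{y}$-balanced or $\mathbf{y}$-constant. *)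

theory Defs
  imports Main
begin

text \<open>Vectors of F_2^k are bit strings of length k, represented as bool lists
  (True = 1, False = 0). Addition in F_2^k is componentwise xor.\<close>

definition vecs :: "nat \<Rightarrow> bool list set" where
  "vecs k = {xs. length xs = k}"

definition vadd :: "bool list \<Rightarrow> bool list \<Rightarrow> bool list" where
  "vadd a b = map2 (\<noteq>) a b"

definition dot :: "bool list \<Rightarrow> bool list \<Rightarrow> bool" where
  "dot a b = odd (length (filter id (map2 (\<and>) a b)))"

definition y_balanced :: "nat \<Rightarrow> (bool list \<Rightarrow> bool list) \<Rightarrow> bool list \<Rightarrow> bool" where
  "y_balanced n f y \<longleftrightarrow>
     2 * card {x \<in> vecs n. dot (f x) y = False} = 2 ^ n \<and>
     2 * card {x \<in> vecs n. dot (f x) y = True} = 2 ^ n"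

definition y_constant :: "nat \<Rightarrow> (bool list \<Rightarrow> bool list) \<Rightarrow> bool list \<Rightarrow> bool" where
  "y_constant n f y \<longleftrightarrow> (\<exists>c. \<forall>x \<in> vecs n. dot (f x) y = c)"

definition fully_balanced :: "nat \<Rightarrow> nat \<Rightarrow> (bool list \<Rightarrow> bool list) \<Rightarrow> bool" where
  "fully_balanced n m f \<longleftrightarrow> (\<forall>y \<in> vecs m. y_balanced n f y \<or> y_constant n f y)"

text \<open>Linear subspace of F_2^m (over F_2 the only scalars are 0 and 1).\<close>
definition linear_subspace :: "nat \<Rightarrow> bool list set \<Rightarrow> bool" where
  "linear_subspace m V \<longleftrightarrow> V \<subseteq> vecs m \<and> replicate m False \<in> V \<and>
     (\<forall>u \<in> V. \<forall>v \<in> V. vadd u v \<in> V)"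

definition affine_subspace :: "nat \<Rightarrow> bool list set \<Rightarrow> bool" where
  "affine_subspace m S \<longleftrightarrow>
     (\<exists>a \<in> vecs m. \<exists>V. linear_subspace m V \<and> S = vadd a ` V)"

end

theory Submission
  imports Defs
begin

lemma dot_Nil1[simp]: "dot [] b = False" by (simp add: dot_def)
lemma dot_Nil2[simp]: "dot a [] = False" by (simp add: dot_def)
lemma dot_Cons[simp]: "dot (x#xs) (y#ys) = ((x\<and>y) \<noteq> dot xs ys)" by (cases x; cases y; simp add: dot_def)
lemma vadd_Cons[simp]: "vadd (x#xs) (y#ys) = (x\<noteq>y) # vadd xs ys" by (simp add: vadd_def)
lemma vadd_Nil1[simp]: "vadd [] b = []" by (simp add: vadd_def)
lemma vadd_Nil2[simp]: "vadd a [] = []" by (simp add: vadd_def)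
lemma length_vadd[simp]: "length (vadd a b) = min (length a) (length b)" by (simp add: vadd_def)

lemma dot_comm: "dot a b = dot b a"
proof (induction a arbitrary: b)
  case Nil then show ?case by simp
next
  case (Cons x xs) then show ?case by (cases b) auto
qed

lemma dot_vadd2: "length y = length z \<Longrightarrow> dot u (vadd y z) = (dot u y \<noteq> dot u z)"
proof (induction u arbitrary: y z)
  case Nil then show ?case by simp
next
  case (Cons x xs)
  then show ?case by (cases y; cases z; auto)
qed

lemma dot_vadd1: "length y = length z \<Longrightarrow> dot (vadd y z) u = (dot y u \<noteq> dot z u)"
  using dot_vadd2 dot_comm by metis

lemma dot_zero1[simp]: "dot (replicate k False) u = False"
  by (induction k arbitrary: u) (auto, case_tac u, auto)
lemma dot_zero2[simp]: "dot u (replicate k False) = False"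
  using dot_zero1 dot_comm by metis

lemma vadd_self_inv: "length a = length b \<Longrightarrow> vadd a (vadd a b) = b"
proof (induction a arbitrary: b)
  case Nil then show ?case by simp
next
  case (Cons x xs) then show ?case by (cases b) auto
qed

lemma vadd_cancel: "length y = length z \<Longrightarrow> vadd (vadd y z) z = y"
proof (induction y arbitrary: z)
  case Nil then show ?case by simp
next
  case (Cons x xs) then show ?case by (cases z) auto
qed

lemma vadd_eq_zero: "length u = length w \<Longrightarrow> (vadd u w = replicate (length u) False) = (u = w)"
proof (induction u arbitrary: w)
  case Nil then show ?case by simp
next
  case (Cons x xs) then show ?case by (cases w) auto
qed

lemma vecs_Suc: "vecs (Suc m) = Cons True ` vecs m \<union> Cons False ` vecs m"
  by (auto simp: vecs_def length_Suc_conv image_iff)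

lemma finite_vecs[simp]: "finite (vecs k)"
proof -
  have "vecs k = {xs. set xs \<subseteq> (UNIV::bool set) \<and> length xs = k}" by (auto simp: vecs_def)
  then show ?thesis using finite_lists_length_eq[of "UNIV::bool set" k] by simp
qed

lemma card_vecs: "card (vecs k) = 2 ^ k"
proof -
  have "vecs k = {xs. set xs \<subseteq> (UNIV::bool set) \<and> length xs = k}" by (auto simp: vecs_def)
  then show ?thesis using card_lists_length_eq[of "UNIV::bool set" k] by simp
qed

definition sg :: "bool \<Rightarrow> int" where "sg b = (if b then -1 else 1)"

lemma sg_mult: "sg p * sg q = sg (p \<noteq> q)" by (simp add: sg_def)
lemma sg_not: "sg (\<not> p) = - sg p" by (simp add: sg_def)

lemma char_sum: "u \<in> vecs m \<Longrightarrow> (\<Sum>y\<in>vecs m. sg (dot u y)) = (if u = replicate m False then 2^m else 0)"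
proof (induction m arbitrary: u)
  case 0 then show ?case by (simp add: vecs_def sg_def)
next
  case (Suc m)
  then obtain b us where u: "u = b # us" and us: "us \<in> vecs m" by (auto simp: vecs_def length_Suc_conv)
  have "(\<Sum>y\<in>vecs (Suc m). sg (dot u y)) =
        (\<Sum>y\<in>Cons True ` vecs m. sg (dot u y)) + (\<Sum>y\<in>Cons False ` vecs m. sg (dot u y))"
    unfolding vecs_Suc by (rule sum.union_disjoint) auto
  also have "\<dots> = (\<Sum>y\<in>vecs m. sg (b \<noteq> dot us y)) + (\<Sum>y\<in>vecs m. sg (dot us y))"
    by (simp add: sum.reindex u)
  also have "\<dots> = (if b then 0 else 2 * (\<Sum>y\<in>vecs m. sg (dot us y)))"
    by (cases b) (simp_all add: sg_not sum_negf)
  also have "\<dots> = (if u = replicate (Suc m) False then 2^Suc m else 0)"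
    using Suc.IH[OF us] by (auto simp: u)
  finally show ?case .
qed

lemma subgroup_sum:
  assumes fin: "finite Y" and cl: "\<forall>y\<in>Y. \<forall>z\<in>Y. vadd y z \<in> Y" and sub: "Y \<subseteq> vecs m"
    and y0: "y0 \<in> Y" and d: "dot u y0"
  shows "(\<Sum>y\<in>Y. sg (dot u y)) = 0"
proof -
  have bij: "bij_betw (\<lambda>y. vadd y y0) Y Y"
    apply (rule bij_betw_byWitness[where f'="\<lambda>y. vadd y y0"])
    using cl y0 sub by (auto simp: vecs_def subset_iff intro!: vadd_cancel)
  have "(\<Sum>y\<in>Y. sg (dot u y)) = (\<Sum>y\<in>Y. sg (dot u (vadd y y0)))"
    using sum.reindex_bij_betw[OF bij, of "\<lambda>y. sg (dot u y)"] by simp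
  also have "\<dots> = (\<Sum>y\<in>Y. - sg (dot u y))"
    apply (rule sum.cong, rule refl)
    using sub y0 d by (subst dot_vadd2) (auto simp: vecs_def subset_iff sg_def)
  finally show ?thesis by (simp add: sum_negf)
qed

lemma sg_sum_card: "finite A \<Longrightarrow> (\<Sum>x\<in>A. sg (p x)) =
   int (card {x\<in>A. p x = False}) - int (card {x\<in>A. p x = True})"
  by (simp add: sg_def sum.If_cases Int_def conj_commute)

lemma card_split: "finite A \<Longrightarrow> card {x\<in>A. p x = False} + card {x\<in>A. p x = True} = card A"
proof -
  assume "finite A"
  have "A = {x\<in>A. p x = False} \<union> {x\<in>A. p x = True}" by auto
  moreover have "card ({x\<in>A. p x = False} \<union> {x\<in>A. p x = True}) = card {x\<in>A. p x = False} + card {x\<in>A. p x = True}"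
    using \<open>finite A\<close> by (intro card_Un_disjoint) auto
  ultimately show ?thesis by simp
qed

lemma balanced_iff_sum: "y_balanced n f y \<longleftrightarrow> (\<Sum>x\<in>vecs n. sg (dot (f x) y)) = 0"
  using sg_sum_card[of "vecs n" "\<lambda>x. dot (f x) y"] card_split[of "vecs n" "\<lambda>x. dot (f x) y"]
  by (auto simp: y_balanced_def card_vecs)

lemma sum_fibres:
  assumes "finite X"
  shows "(\<Sum>x\<in>X. h (f x)) = (\<Sum>w\<in>f ` X. int (card {x\<in>X. f x = w}) * h w)"
proof -
  have "(\<Sum>x\<in>X. h (f x)) = (\<Sum>w\<in>f ` X. \<Sum>x\<in>{x\<in>X. f x = w}. h (f x))"
    using sum.image_gen[OF assms, of "\<lambda>x. h (f x)" f] by simp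
  also have "\<dots> = (\<Sum>w\<in>f ` X. int (card {x\<in>X. f x = w}) * h w)"
    by (rule sum.cong) auto
  finally show ?thesis .
qed

lemma backward:
  assumes fm: "\<forall>x \<in> vecs n. f x \<in> vecs m"
    and a: "a \<in> vecs m" and V: "linear_subspace m V" and S: "f ` vecs n = vadd a ` V"
    and k: "\<forall>w \<in> f ` vecs n. card {x \<in> vecs n. f x = w} = k"
  shows "fully_balanced n m f"
  unfolding fully_balanced_def
proof
  fix y assume y: "y \<in> vecs m"
  have Vsub: "V \<subseteq> vecs m" and Vcl: "\<forall>u\<in>V. \<forall>v\<in>V. vadd u v \<in> V" using V by (auto simp: linear_subspace_def)
  have finV: "finite V" by (rule finite_subset[OF Vsub]) simp
  show "y_balanced n f y \<or> y_constant n f y"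
  proof (cases "\<forall>v\<in>V. dot v y = False")
    case True
    have "\<forall>x\<in>vecs n. dot (f x) y = dot a y"
    proof
      fix x assume "x \<in> vecs n"
      then obtain v where v: "v \<in> V" "f x = vadd a v" using S by blast
      then show "dot (f x) y = dot a y" using True Vsub a by (auto simp: dot_vadd1 vecs_def)
    qed
    then show ?thesis by (auto simp: y_constant_def)
  next
    case False
    then obtain v0 where v0': "v0 \<in> V" "dot v0 y" by auto
    then have v0: "v0 \<in> V" "dot y v0" using dot_comm by metis+
    have inj: "inj_on (vadd a) V"
      by (rule inj_on_inverseI[where g="vadd a"]) (use Vsub a in \<open>auto simp: vecs_def vadd_self_inv\<close>)
    have "(\<Sum>x\<in>vecs n. sg (dot (f x) y)) = (\<Sum>w\<in>f ` vecs n. int (card {x\<in>vecs n. f x = w}) * sg (dot w y))"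
      by (rule sum_fibres) simp
    also have "\<dots> = (\<Sum>w\<in>f ` vecs n. int k * sg (dot w y))"
      using k by (intro sum.cong) auto
    also have "\<dots> = (\<Sum>v\<in>V. int k * sg (dot (vadd a v) y))"
      unfolding S by (simp add: sum.reindex[OF inj])
    also have "\<dots> = (\<Sum>v\<in>V. int k * sg (dot a y) * sg (dot y v))"
      apply (rule sum.cong, rule refl)
      using Vsub a by (subst dot_vadd1) (auto simp: vecs_def sg_mult dot_comm[of y])
    also have "\<dots> = int k * sg (dot a y) * (\<Sum>v\<in>V. sg (dot y v))"
      by (simp add: sum_distrib_left)
    also have "(\<Sum>v\<in>V. sg (dot y v)) = 0"
      using subgroup_sum[OF finV Vcl Vsub v0] .
    finally show ?thesis by (simp add: balanced_iff_sum)
  qed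
qed

lemma sum_if_card: "finite A \<Longrightarrow> (\<Sum>x\<in>A. if P x then (c::int) else 0) = c * int (card {x\<in>A. P x})"
  by (simp add: sum.inter_filter[symmetric])

lemma forward:
  assumes fm: "\<forall>x \<in> vecs n. f x \<in> vecs m" and fb: "fully_balanced n m f"
  shows "affine_subspace m (f ` vecs n) \<and>
     (\<exists>k. \<forall>w \<in> f ` vecs n. card {x \<in> vecs n. f x = w} = k)"
proof -
  define x0 where "x0 = replicate n False"
  have x0: "x0 \<in> vecs n" by (simp add: x0_def vecs_def)
  define a where "a = f x0"
  have a: "a \<in> vecs m" using fm x0 by (simp add: a_def)
  define Y where "Y = {y\<in>vecs m. \<forall>x\<in>vecs n. dot (f x) y = dot a y}"
  define V where "V = {v\<in>vecs m. \<forall>y\<in>Y. dot v y = False}"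
  define c where "c w = card {x\<in>vecs n. f x = w}" for w
  have Ysub: "Y \<subseteq> vecs m" by (auto simp: Y_def)
  have finY: "finite Y" by (rule finite_subset[OF Ysub]) simp
  have zY: "replicate m False \<in> Y" by (simp add: Y_def vecs_def)
  have cardY: "card Y > 0" using finY zY card_gt_0_iff by blast
  have lenf: "length (f x) = m" if "x \<in> vecs n" for x using fm that by (auto simp: vecs_def)
  have lena: "length a = m" using a by (simp add: vecs_def)
  have Ycl: "\<forall>y\<in>Y. \<forall>z\<in>Y. vadd y z \<in> Y"
    by (auto simp: Y_def vecs_def dot_vadd2)
  have ghat: "(\<Sum>x\<in>vecs n. sg (dot (f x) y)) = (if y \<in> Y then 2^n * sg (dot a y) else 0)"
    if y: "y \<in> vecs m" for y
  proof (cases "y \<in> Y")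
    case True
    then have "(\<Sum>x\<in>vecs n. sg (dot (f x) y)) = (\<Sum>x\<in>vecs n. sg (dot a y))"
      by (intro sum.cong) (auto simp: Y_def)
    then show ?thesis using True by (simp add: card_vecs)
  next
    case False
    have "\<not> y_constant n f y"
    proof
      assume "y_constant n f y"
      then obtain cc where cc: "\<forall>x\<in>vecs n. dot (f x) y = cc" by (auto simp: y_constant_def)
      then have "cc = dot a y" using x0 by (simp add: a_def)
      then show False using False cc y by (auto simp: Y_def)
    qed
    then have "y_balanced n f y" using fb y by (auto simp: fully_balanced_def)
    then show ?thesis using False by (simp add: balanced_iff_sum)
  qed
  have charY: "(\<Sum>y\<in>Y. sg (dot u y)) = (if u \<in> V then int (card Y) else 0)"
    if u: "u \<in> vecs m" for u
  proof (cases "u \<in> V")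
    case True
    then have "(\<Sum>y\<in>Y. sg (dot u y)) = (\<Sum>y\<in>Y. 1)"
      by (intro sum.cong) (auto simp: V_def sg_def)
    then show ?thesis using True by simp
  next
    case False
    then obtain y0 where "y0 \<in> Y" "dot u y0" using u by (auto simp: V_def)
    then show ?thesis using subgroup_sum[OF finY Ycl Ysub] False by auto
  qed
  have cw: "2^m * int (c w) = (if vadd a w \<in> V then 2^n * int (card Y) else 0)"
    if w: "w \<in> vecs m" for w
  proof -
    have lw: "length w = m" using w by (simp add: vecs_def)
    have "(\<Sum>y\<in>vecs m. (\<Sum>x\<in>vecs n. sg (dot (f x) y)) * sg (dot w y))
        = (\<Sum>y\<in>vecs m. \<Sum>x\<in>vecs n. sg (dot (vadd (f x) w) y))"
      apply (rule sum.cong, rule refl)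
      apply (simp add: sum_distrib_right)
      apply (rule sum.cong, rule refl)
      using lenf lw by (simp add: dot_vadd1 sg_mult)
    also have "\<dots> = (\<Sum>x\<in>vecs n. \<Sum>y\<in>vecs m. sg (dot (vadd (f x) w) y))"
      by (rule sum.swap)
    also have "\<dots> = (\<Sum>x\<in>vecs n. if f x = w then 2^m else 0)"
      apply (rule sum.cong, rule refl)
      apply (subst char_sum)
      using lenf lw vadd_eq_zero[of "f _" w] by (auto simp: vecs_def)
    also have "\<dots> = 2^m * int (c w)"
      by (simp add: sum_if_card c_def)
    finally have 1: "(\<Sum>y\<in>vecs m. (\<Sum>x\<in>vecs n. sg (dot (f x) y)) * sg (dot w y)) = 2^m * int (c w)" .
    have "(\<Sum>y\<in>vecs m. (\<Sum>x\<in>vecs n. sg (dot (f x) y)) * sg (dot w y))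
        = (\<Sum>y\<in>vecs m. if y \<in> Y then 2^n * sg (dot (vadd a w) y) else 0)"
      apply (rule sum.cong, rule refl)
      using lena lw by (simp add: ghat dot_vadd1 sg_mult)
    also have "\<dots> = (\<Sum>y\<in>Y. 2^n * sg (dot (vadd a w) y))"
    proof -
      have "{y \<in> vecs m. y \<in> Y} = Y" using Ysub by auto
      then show ?thesis by (simp add: sum.inter_filter[symmetric])
    qed
    also have "\<dots> = 2^n * (if vadd a w \<in> V then int (card Y) else 0)"
      using charY[of "vadd a w"] lena lw by (simp add: sum_distrib_left[symmetric] vecs_def)
    finally show ?thesis using 1 by simp
  qed
  have lin: "linear_subspace m V"
    unfolding linear_subspace_def
    by (auto simp: V_def vecs_def dot_vadd1)
  have S: "f ` vecs n = vadd a ` V"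
  proof
    show "f ` vecs n \<subseteq> vadd a ` V"
    proof
      fix w assume "w \<in> f ` vecs n"
      then obtain x where x: "x \<in> vecs n" "w = f x" by auto
      then have wm: "w \<in> vecs m" using fm by auto
      have "c w > 0" unfolding c_def using x by (auto simp: card_gt_0_iff)
      then have "vadd a w \<in> V" using cw[OF wm] by (auto split: if_splits)
      moreover have "w = vadd a (vadd a w)" using wm lena by (simp add: vadd_self_inv vecs_def)
      ultimately show "w \<in> vadd a ` V" by blast
    qed
  next
    show "vadd a ` V \<subseteq> f ` vecs n"
    proof
      fix w assume "w \<in> vadd a ` V"
      then obtain v where v: "v \<in> V" "w = vadd a v" by auto
      then have vm: "v \<in> vecs m" by (simp add: V_def)
      then have wm: "w \<in> vecs m" using v lena by (simp add: vecs_def)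
      have "vadd a w = v" using v vm lena by (simp add: vadd_self_inv vecs_def)
      then have "2^m * int (c w) = 2^n * int (card Y)" using cw[OF wm] v by simp
      then have "c w \<noteq> 0"
      proof (intro notI)
        assume e: "2^m * int (c w) = 2^n * int (card Y)" and z: "c w = 0"
        then have "(2::int)^n * int (card Y) = 0" by simp
        then show False using cardY by simp
      qed
      then have "{x\<in>vecs n. f x = w} \<noteq> {}" unfolding c_def by (metis card.empty)
      then show "w \<in> f ` vecs n" by blast
    qed
  qed
  have "\<forall>w \<in> f ` vecs n. c w = (2^n * card Y) div 2^m"
  proof
    fix w assume "w \<in> f ` vecs n"
    then obtain v where v: "v \<in> V" "w = vadd a v" using S by auto
    then have vm: "v \<in> vecs m" by (simp add: V_def)
    then have wm: "w \<in> vecs m" using v lena by (simp add: vecs_def)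
    have "vadd a w = v" using v vm lena by (simp add: vadd_self_inv vecs_def)
    then have "2^m * int (c w) = 2^n * int (card Y)" using cw[OF wm] v by simp
    then have "int (2^m * c w) = int (2^n * card Y)" by simp
    then have e: "2^m * c w = 2^n * card Y" by (simp only: of_nat_eq_iff)
    have "(2^m * c w) div 2^m = c w" by simp
    then show "c w = (2^n * card Y) div 2^m" using e by simp
  qed
  then have "\<exists>k. \<forall>w \<in> f ` vecs n. card {x \<in> vecs n. f x = w} = k" unfolding c_def by (rule exI)
  moreover have "\<exists>V. linear_subspace m V \<and> f ` vecs n = vadd a ` V" by (intro exI[of _ V] conjI lin S)
  then have "affine_subspace m (f ` vecs n)" unfolding affine_subspace_def using a by (rule bexI)
  ultimately show ?thesis by (rule conjI[rotated])
qed

theorem mainTheorem3: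
  fixes n m :: nat and f :: "bool list \<Rightarrow> bool list"
  assumes "\<forall>x \<in> vecs n. f x \<in> vecs m"
  shows "fully_balanced n m f \<longleftrightarrow>
    (affine_subspace m (f ` vecs n) \<and>
     (\<exists>k. \<forall>w \<in> f ` vecs n. card {x \<in> vecs n. f x = w} = k))"
proof
  assume "fully_balanced n m f"
  then show "affine_subspace m (f ` vecs n) \<and> (\<exists>k. \<forall>w \<in> f ` vecs n. card {x \<in> vecs n. f x = w} = k)"
    by (rule forward[OF assms])
next
  assume h: "affine_subspace m (f ` vecs n) \<and> (\<exists>k. \<forall>w \<in> f ` vecs n. card {x \<in> vecs n. f x = w} = k)"
  then obtain k where k: "\<forall>w \<in> f ` vecs n. card {x \<in> vecs n. f x = w} = k" by (elim conjE exE)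
  from h obtain a V where "a \<in> vecs m" "linear_subspace m V" "f ` vecs n = vadd a ` V"
    unfolding affine_subspace_def by (elim conjE bexE exE)
  then show "fully_balanced n m f" using k by (rule backward[OF assms])
qed

end
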